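(* Let $K$ be a field, $n\ge2$, and $\vartheta$ any one of the four types (left, right, pre-two-sided, two-sided). A $K$-subspace $V\subset M_n(K)$ is a minimal non-trivial $\vartheta$-Mathieu subspace of $M_n(K)$ if and only if $V=KA$ for some nonzero $A\in M_n(K)$ which is not a quasi-idempotent.
   Context: $M_n(K)$ is the algebra of $n\times n$ matrices over $K$. $A$ is a quasi-idempotent if $A^2=rA$ for some $r\in K^\times$. A subspace is non-trivial if it is neither $0$ nor the whole algebra; a minimal non-trivial $\vartheta$-Mathieu subspace is one minimal under inclusion among non-trivial $\vartheta$-Mathieu subspaces. A $K$-subspace $V$ of an algebra $\mathcal A$ is a left (resp. right) Mathieu subspace if whenever $a^m\in V$ for all $m\ge1$, then for every $b\in\mathcal A$, $ba^m\in V$ (resp. $a^mb\in V$) for all sufficiently large $m$; pre-two-sided if both left and right; two-sided if whenever $a^m\in V$ for all $m\ge1$, for all $b,c\in\mathcal A$, $ba^mc\in V$ for all sufficiently large $m$. *)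

theory Defs
  imports "Jordan_Normal_Form.Matrix"
begin

definition is_K_subspace :: "nat \<Rightarrow> 'a::field mat set \<Rightarrow> bool" where
  "is_K_subspace n V \<longleftrightarrow> V \<subseteq> carrier_mat n n \<and> 0\<^sub>m n n \<in> V
     \<and> (\<forall>A\<in>V. \<forall>B\<in>V. A + B \<in> V) \<and> (\<forall>c. \<forall>A\<in>V. c \<cdot>\<^sub>m A \<in> V)"

datatype mathieu_type = LeftT | RightT | PreTwoSidedT | TwoSidedT

definition all_powers_in :: "'a::field mat \<Rightarrow> 'a mat set \<Rightarrow> bool" where
  "all_powers_in a V \<longleftrightarrow> (\<forall>m::nat. m \<ge> 1 \<longrightarrow> a ^\<^sub>m m \<in> V)"

definition left_mathieu :: "nat \<Rightarrow> 'a::field mat set \<Rightarrow> bool" where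
  "left_mathieu n V \<longleftrightarrow> is_K_subspace n V \<and>
     (\<forall>a\<in>carrier_mat n n. all_powers_in a V \<longrightarrow>
        (\<forall>b\<in>carrier_mat n n. \<exists>N. \<forall>m\<ge>N. b * a ^\<^sub>m m \<in> V))"

definition right_mathieu :: "nat \<Rightarrow> 'a::field mat set \<Rightarrow> bool" where
  "right_mathieu n V \<longleftrightarrow> is_K_subspace n V \<and>
     (\<forall>a\<in>carrier_mat n n. all_powers_in a V \<longrightarrow>
        (\<forall>b\<in>carrier_mat n n. \<exists>N. \<forall>m\<ge>N. a ^\<^sub>m m * b \<in> V))"

definition two_sided_mathieu :: "nat \<Rightarrow> 'a::field mat set \<Rightarrow> bool" where
  "two_sided_mathieu n V \<longleftrightarrow> is_K_subspace n V \<and>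
     (\<forall>a\<in>carrier_mat n n. all_powers_in a V \<longrightarrow>
        (\<forall>b\<in>carrier_mat n n. \<forall>c\<in>carrier_mat n n. \<exists>N. \<forall>m\<ge>N. b * a ^\<^sub>m m * c \<in> V))"

fun mathieu :: "mathieu_type \<Rightarrow> nat \<Rightarrow> 'a::field mat set \<Rightarrow> bool" where
  "mathieu LeftT n V = left_mathieu n V"
| "mathieu RightT n V = right_mathieu n V"
| "mathieu PreTwoSidedT n V = (left_mathieu n V \<and> right_mathieu n V)"
| "mathieu TwoSidedT n V = two_sided_mathieu n V"

definition nontrivial_subspace :: "nat \<Rightarrow> 'a::field mat set \<Rightarrow> bool" where
  "nontrivial_subspace n V \<longleftrightarrow> V \<noteq> {0\<^sub>m n n} \<and> V \<noteq> carrier_mat n n"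

definition minimal_nontrivial_mathieu :: "mathieu_type \<Rightarrow> nat \<Rightarrow> 'a::field mat set \<Rightarrow> bool" where
  "minimal_nontrivial_mathieu \<theta> n V \<longleftrightarrow> mathieu \<theta> n V \<and> nontrivial_subspace n V \<and>
     (\<forall>W. mathieu \<theta> n W \<and> nontrivial_subspace n W \<and> W \<subseteq> V \<longrightarrow> W = V)"

definition quasi_idempotent :: "'a::field mat \<Rightarrow> bool" where
  "quasi_idempotent A \<longleftrightarrow> (\<exists>r. r \<noteq> 0 \<and> A * A = r \<cdot>\<^sub>m A)"

end

theory Submission
  imports Defs
begin

lemma smult_smult_mat': "c \<cdot>\<^sub>m (d \<cdot>\<^sub>m (A::'a::field mat)) = (c*d) \<cdot>\<^sub>m A"
  by (rule eq_matI) auto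

lemma one_smult_mat'[simp]: "1 \<cdot>\<^sub>m (A::'a::field mat) = A"
  by (rule eq_matI) auto

lemma smult_cancel0:
  assumes "(r::'a::field) \<noteq> 0" "r \<cdot>\<^sub>m N = 0\<^sub>m n n" "N \<in> carrier_mat n n"
  shows "N = 0\<^sub>m n n"
proof (rule eq_matI)
  fix i j assume "i < dim_row (0\<^sub>m n n :: 'a mat)" "j < dim_col (0\<^sub>m n n :: 'a mat)"
  then have "(r \<cdot>\<^sub>m N) $$ (i,j) = 0" using assms(2) by simp
  then have "r * N $$ (i,j) = 0" using assms(3) \<open>i < _\<close> \<open>j < _\<close> by simp
  then show "N $$ (i,j) = 0\<^sub>m n n $$ (i,j)" using assms \<open>i < _\<close> \<open>j < _\<close> by auto
qed (use assms in auto)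

lemma pow_idem:
  assumes "E \<in> carrier_mat n n" "E * E = (E::'a::field mat)" "m \<ge> 1"
  shows "E ^\<^sub>m m = E"
  using assms(3)
proof (induction m)
  case (Suc k)
  show ?case
  proof (cases "k = 0")
    case True then show ?thesis using assms by simp
  next
    case False then show ?thesis using Suc assms by simp
  qed
qed simp

lemma pow_nil:
  assumes "a \<in> carrier_mat n n" "a * a = 0\<^sub>m n (n::nat)" "m \<ge> 2"
  shows "a ^\<^sub>m m = (0\<^sub>m n n :: 'a::field mat)"
  using assms(3)
proof (induction m)
  case (Suc k)
  show ?case
  proof (cases "k = 1")
    case True then show ?thesis using assms by simp
  next
    case False then show ?thesis using Suc assms by simp
  qed
qed simp

lemma exists_PUQ:
  assumes P: "P \<in> carrier_mat n n" and Q: "Q \<in> carrier_mat n n"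
    and "P \<noteq> 0\<^sub>m n n" "Q \<noteq> (0\<^sub>m n n :: 'a::field mat)"
  shows "\<exists>U\<in>carrier_mat n n. P * U * Q \<noteq> 0\<^sub>m n n"
proof -
  obtain i j where ij: "i < n" "j < n" "P $$ (i,j) \<noteq> 0"
    using assms(3) P by (metis carrier_matD(1) carrier_matD(2) eq_matI index_zero_mat(1) index_zero_mat(2) index_zero_mat(3))
  obtain k l where kl: "k < n" "l < n" "Q $$ (k,l) \<noteq> 0"
    using assms(4) Q by (metis carrier_matD(1) carrier_matD(2) eq_matI index_zero_mat(1) index_zero_mat(2) index_zero_mat(3))
  define U :: "'a mat" where "U = mat n n (\<lambda>(s,t). if s = j \<and> t = k then 1 else 0)"
  have U: "U \<in> carrier_mat n n" unfolding U_def by simp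
  have PU: "(P * U) $$ (i,t) = (if t = k then P $$ (i,j) else 0)" if "t < n" for t
  proof -
    have "(P * U) $$ (i,t) = (\<Sum>s\<in>{0..<n}. P $$ (i,s) * U $$ (s,t))"
      using P U ij that by (simp add: scalar_prod_def)
    also have "\<dots> = (\<Sum>s\<in>{0..<n}. if s = j then (if t = k then P $$ (i,j) else 0) else 0)"
      by (rule sum.cong) (use that in \<open>auto simp: U_def\<close>)
    also have "\<dots> = (if t = k then P $$ (i,j) else 0)" using ij by simp
    finally show ?thesis .
  qed
  have "(P * U * Q) $$ (i,l) = (\<Sum>t\<in>{0..<n}. (P * U) $$ (i,t) * Q $$ (t,l))"
    using P U Q ij kl by (simp add: scalar_prod_def del: assoc_mult_mat)
  also have "\<dots> = (\<Sum>t\<in>{0..<n}. if t = k then P $$ (i,j) * Q $$ (k,l) else 0)"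
    by (rule sum.cong) (auto simp: PU)
  also have "\<dots> = P $$ (i,j) * Q $$ (k,l)" using kl by simp
  finally have "(P * U * Q) $$ (i,l) \<noteq> 0" using ij kl by simp
  then have "P * U * Q \<noteq> 0\<^sub>m n n" using ij kl by auto
  then show ?thesis using U by blast
qed

lemma zero_smult_mat': "A \<in> carrier_mat n n \<Longrightarrow> 0 \<cdot>\<^sub>m A = (0\<^sub>m n n :: 'a::field mat)"
  by (rule eq_matI) auto

lemma line_subspace:
  assumes A: "A \<in> carrier_mat n n"
  shows "is_K_subspace n {c \<cdot>\<^sub>m (A::'a::field mat) | c. True}"
  unfolding is_K_subspace_def
proof (intro conjI ballI allI)
  show "{c \<cdot>\<^sub>m A |c. True} \<subseteq> carrier_mat n n" using A by auto
  show "0\<^sub>m n n \<in> {c \<cdot>\<^sub>m A |c. True}" by (intro CollectI exI[of _ 0]) (simp add: zero_smult_mat'[OF A])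
  fix X Y assume "X \<in> {c \<cdot>\<^sub>m A |c. True}" "Y \<in> {c \<cdot>\<^sub>m A |c. True}"
  then obtain c d where "X = c \<cdot>\<^sub>m A" "Y = d \<cdot>\<^sub>m A" by auto
  then have "X + Y = (c + d) \<cdot>\<^sub>m A" using add_smult_distrib_right_mat[OF A] by simp
  then show "X + Y \<in> {c \<cdot>\<^sub>m A |c. True}" by blast
next
  fix k X assume "X \<in> {c \<cdot>\<^sub>m A |c. True}"
  then obtain c where "X = c \<cdot>\<^sub>m A" by auto
  then have "k \<cdot>\<^sub>m X = (k * c) \<cdot>\<^sub>m A" by (simp add: smult_smult_mat')
  then show "k \<cdot>\<^sub>m X \<in> {c \<cdot>\<^sub>m A |c. True}" by blast
qed

lemma line_powers_zero:
  assumes A: "A \<in> carrier_mat n n" and nq: "\<not> quasi_idempotent A"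
    and a: "a \<in> carrier_mat n n" and ap: "all_powers_in a {c \<cdot>\<^sub>m (A::'a::field mat) | c. True}"
    and m: "m \<ge> 2"
  shows "a ^\<^sub>m m = 0\<^sub>m n n"
proof -
  have "a ^\<^sub>m 1 \<in> {c \<cdot>\<^sub>m A | c. True}" using ap[unfolded all_powers_in_def, rule_format, of 1] by simp
  moreover have "a ^\<^sub>m 1 = a" using a by simp
  ultimately obtain c where c: "a = c \<cdot>\<^sub>m A" by auto
  have "a ^\<^sub>m 2 \<in> {c \<cdot>\<^sub>m A | c. True}" using ap[unfolded all_powers_in_def, rule_format, of 2] by simp
  moreover have "a ^\<^sub>m 2 = a * a" using a by (simp add: numeral_2_eq_2)
  ultimately obtain d where d: "a * a = d \<cdot>\<^sub>m A" by auto
  have aa: "a * a = (c * c) \<cdot>\<^sub>m (A * A)"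
  proof -
    have "(c \<cdot>\<^sub>m A) * (c \<cdot>\<^sub>m A) = c \<cdot>\<^sub>m (A * (c \<cdot>\<^sub>m A))"
      using A by (intro mult_smult_assoc_mat) auto
    also have "A * (c \<cdot>\<^sub>m A) = c \<cdot>\<^sub>m (A * A)" using A by (intro mult_smult_distrib) auto
    finally show ?thesis unfolding c by (simp add: smult_smult_mat')
  qed
  have "a * a = 0\<^sub>m n n"
  proof (cases "c = 0")
    case True
    then have "a = 0\<^sub>m n n" using c zero_smult_mat'[OF A] by simp
    then show ?thesis using a by simp
  next
    case False
    have "(1/(c*c)) \<cdot>\<^sub>m (a * a) = A * A"
      using aa False by (simp add: smult_smult_mat')
    also have "(1/(c*c)) \<cdot>\<^sub>m (a * a) = (d/(c*c)) \<cdot>\<^sub>m A"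
      using d by (simp add: smult_smult_mat')
    finally have "A * A = (d/(c*c)) \<cdot>\<^sub>m A" by simp
    with nq have "d/(c*c) = 0" unfolding quasi_idempotent_def by blast
    then have "A * A = 0\<^sub>m n n" using \<open>A * A = _\<close> zero_smult_mat'[OF A] by (simp only:)
    then show ?thesis using aa by simp
  qed
  then show ?thesis using pow_nil[OF a _ m] by simp
qed

lemma line_mathieu:
  assumes A: "A \<in> carrier_mat n n" and nq: "\<not> quasi_idempotent (A::'a::field mat)"
  shows "mathieu \<theta> n {c \<cdot>\<^sub>m A | c. True}"
proof -
  let ?V = "{c \<cdot>\<^sub>m A | c. True}"
  have sub: "is_K_subspace n ?V" by (rule line_subspace[OF A])
  have z: "0\<^sub>m n n \<in> ?V" using sub unfolding is_K_subspace_def by blast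
  have L: "left_mathieu n ?V" unfolding left_mathieu_def
  proof (intro conjI sub ballI impI)
    fix a b :: "'a mat" assume a: "a \<in> carrier_mat n n" and ap: "all_powers_in a ?V" and b: "b \<in> carrier_mat n n"
    have "\<forall>m\<ge>2. b * a ^\<^sub>m m \<in> ?V" using line_powers_zero[OF A nq a ap] b z by auto
    then show "\<exists>N. \<forall>m\<ge>N. b * a ^\<^sub>m m \<in> ?V" by blast
  qed
  have R: "right_mathieu n ?V" unfolding right_mathieu_def
  proof (intro conjI sub ballI impI)
    fix a b :: "'a mat" assume a: "a \<in> carrier_mat n n" and ap: "all_powers_in a ?V" and b: "b \<in> carrier_mat n n"
    have "\<forall>m\<ge>2. a ^\<^sub>m m * b \<in> ?V" using line_powers_zero[OF A nq a ap] b z by auto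
    then show "\<exists>N. \<forall>m\<ge>N. a ^\<^sub>m m * b \<in> ?V" by blast
  qed
  have T: "two_sided_mathieu n ?V" unfolding two_sided_mathieu_def
  proof (intro conjI sub ballI impI)
    fix a b c :: "'a mat" assume a: "a \<in> carrier_mat n n" and ap: "all_powers_in a ?V" and b: "b \<in> carrier_mat n n"
      and c: "c \<in> carrier_mat n n"
    have "\<forall>m\<ge>2. b * a ^\<^sub>m m * c \<in> ?V" using line_powers_zero[OF A nq a ap] b c z by auto
    then show "\<exists>N. \<forall>m\<ge>N. b * a ^\<^sub>m m * c \<in> ?V" by blast
  qed
  show ?thesis using L R T by (cases \<theta>) auto
qed

lemma line_nontrivial:
  assumes n: "n \<ge> 2" and A: "A \<in> carrier_mat n n" and A0: "A \<noteq> (0\<^sub>m n n :: 'a::field mat)"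
  shows "nontrivial_subspace n {c \<cdot>\<^sub>m A | c. True}"
  unfolding nontrivial_subspace_def
proof
  have "A \<in> {c \<cdot>\<^sub>m A | c. True}" by (intro CollectI exI[of _ 1]) simp
  then show "{c \<cdot>\<^sub>m A | c. True} \<noteq> {0\<^sub>m n n}" using A0 by auto
next
  show "{c \<cdot>\<^sub>m A | c. True} \<noteq> carrier_mat n n"
  proof
    assume eq: "{c \<cdot>\<^sub>m A | c. True} = carrier_mat n n"
    define M :: "'a mat" where "M = mat n n (\<lambda>(i,j). if i = 0 \<and> j = 1 then 1 else 0)"
    have "1\<^sub>m n \<in> {c \<cdot>\<^sub>m A | c. True}" using eq by simp
    then obtain c' where c': "1\<^sub>m n = c' \<cdot>\<^sub>m A" by auto
    have "M \<in> {c \<cdot>\<^sub>m A | c. True}" using eq unfolding M_def by simp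
    then obtain c where c: "M = c \<cdot>\<^sub>m A" by auto
    have "c' \<noteq> 0"
    proof
      assume "c' = 0"
      then have "(1\<^sub>m n :: 'a mat) = 0\<^sub>m n n" using c' zero_smult_mat'[OF A] by simp
      then have "(1\<^sub>m n :: 'a mat) $$ (0,0) = 0\<^sub>m n n $$ (0,0)" by simp
      then show False using n by simp
    qed
    have "M = (c/c') \<cdot>\<^sub>m (c' \<cdot>\<^sub>m A)" using c \<open>c' \<noteq> 0\<close> by (simp add: smult_smult_mat')
    then have "M = (c/c') \<cdot>\<^sub>m 1\<^sub>m n" using c' by simp
    then have "M $$ (0,1) = ((c/c') \<cdot>\<^sub>m 1\<^sub>m n) $$ (0,1)" by simp
    then show False using n unfolding M_def by simp
  qed
qed

lemma line_minimal:
  assumes W: "is_K_subspace n W" and sub: "W \<subseteq> {c \<cdot>\<^sub>m (A::'a::field mat) | c. True}"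
    and nz: "W \<noteq> {0\<^sub>m n n}"
  shows "W = {c \<cdot>\<^sub>m A | c. True}"
proof
  show "W \<subseteq> {c \<cdot>\<^sub>m A | c. True}" by (rule sub)
  have z: "0\<^sub>m n n \<in> W" using W unfolding is_K_subspace_def by blast
  obtain w where w: "w \<in> W" "w \<noteq> 0\<^sub>m n n" using nz z by blast
  then obtain c where c: "w = c \<cdot>\<^sub>m A" using sub by auto
  have "c \<noteq> 0"
  proof
    assume "c = 0"
    then have "w = 0 \<cdot>\<^sub>m (c \<cdot>\<^sub>m A)" using c by (simp add: smult_smult_mat')
    then have "w = 0 \<cdot>\<^sub>m w" using c by simp
    moreover have "0 \<cdot>\<^sub>m w \<in> W" using W w unfolding is_K_subspace_def by blast
    moreover have "w \<in> carrier_mat n n" using W w unfolding is_K_subspace_def by blast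
    ultimately show False using w zero_smult_mat' by metis
  qed
  show "{c \<cdot>\<^sub>m A | c. True} \<subseteq> W"
  proof
    fix X assume "X \<in> {c \<cdot>\<^sub>m A | c. True}"
    then obtain d where d: "X = d \<cdot>\<^sub>m A" by auto
    have "X = (d/c) \<cdot>\<^sub>m w" using d c \<open>c \<noteq> 0\<close> by (simp add: smult_smult_mat')
    then show "X \<in> W" using W w unfolding is_K_subspace_def by blast
  qed
qed

lemma nilp_not_qi:
  assumes N: "N \<in> carrier_mat n n" "N \<noteq> 0\<^sub>m n n" "N * N = (0\<^sub>m n n :: 'a::field mat)"
  shows "\<not> quasi_idempotent N"
proof
  assume "quasi_idempotent N"
  then obtain r where "r \<noteq> 0" "N * N = r \<cdot>\<^sub>m N" unfolding quasi_idempotent_def by blast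
  then have "N = 0\<^sub>m n n" using smult_cancel0[of r N n] N by simp
  then show False using N by simp
qed

lemma idem_side:
  assumes E: "E \<in> carrier_mat n n" "E * E = E" "E \<noteq> 0\<^sub>m n n"
    and sub: "is_K_subspace n V" and ne: "V \<noteq> carrier_mat n n"
    and side: "(\<forall>b\<in>carrier_mat n n. b * E \<in> V) \<or> (\<forall>b\<in>carrier_mat n n. E * b \<in> V)"
  shows "\<exists>N\<in>V. N \<noteq> 0\<^sub>m n n \<and> \<not> quasi_idempotent (N::'a::field mat)"
proof -
  have Vc: "V \<subseteq> carrier_mat n n" using sub unfolding is_K_subspace_def by blast
  have "E \<noteq> 1\<^sub>m n"
  proof
    assume "E = 1\<^sub>m n"
    then have "carrier_mat n n \<subseteq> V" using side by auto
    then show False using Vc ne by blast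
  qed
  define P where "P = 1\<^sub>m n - E"
  have P: "P \<in> carrier_mat n n" unfolding P_def using E by (simp add: minus_carrier_mat)
  have P0: "P \<noteq> 0\<^sub>m n n"
  proof
    assume "P = 0\<^sub>m n n"
    then have "P + E = E" using E by simp
    moreover have "P + E = 1\<^sub>m n" unfolding P_def using E by (intro eq_matI) auto
    ultimately show False using \<open>E \<noteq> 1\<^sub>m n\<close> by simp
  qed
  have EP: "E * P = 0\<^sub>m n n" unfolding P_def using E
    by (simp add: mult_minus_distrib_mat[of E n n "1\<^sub>m n" n E])
  have PE: "P * E = 0\<^sub>m n n" unfolding P_def using E
    by (simp add: minus_mult_distrib_mat[of "1\<^sub>m n" n n E E n])
  have EPX: "E * (P * X) = 0\<^sub>m n n" if "X \<in> carrier_mat n n" for X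
  proof -
    have "E * (P * X) = (E * P) * X" using E P that by simp
    then show ?thesis using EP that by simp
  qed
  have PEX: "P * (E * X) = 0\<^sub>m n n" if "X \<in> carrier_mat n n" for X
  proof -
    have "P * (E * X) = (P * E) * X" using E P that by simp
    then show ?thesis using PE that by simp
  qed
  from side show ?thesis
  proof
    assume L: "\<forall>b\<in>carrier_mat n n. b * E \<in> V"
    obtain U where U: "U \<in> carrier_mat n n" "P * U * E \<noteq> 0\<^sub>m n n"
      using exists_PUQ[OF P E(1) P0 E(3)] by blast
    let ?N = "P * U * E"
    have NV: "?N \<in> V" using L P U by simp
    have c1: "U * E \<in> carrier_mat n n" "P * (U * E) \<in> carrier_mat n n" using P U E by auto
    have "?N * ?N = P * (U * E) * (P * (U * E))" using P U E by simp
    also have "\<dots> = P * ((U * E) * (P * (U * E)))" using P c1 by (rule assoc_mult_mat)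
    also have "(U * E) * (P * (U * E)) = U * (E * (P * (U * E)))" using U E c1 by (intro assoc_mult_mat) auto
    finally have "?N * ?N = P * (U * (E * (P * (U * E))))" .
    also have "\<dots> = 0\<^sub>m n n" using EPX[of "U * E"] P U E by simp
    finally have "?N * ?N = 0\<^sub>m n n" .
    then show ?thesis using NV U nilp_not_qi[of ?N n] P E by auto
  next
    assume R: "\<forall>b\<in>carrier_mat n n. E * b \<in> V"
    obtain U where U: "U \<in> carrier_mat n n" "E * U * P \<noteq> 0\<^sub>m n n"
      using exists_PUQ[OF E(1) P E(3) P0] by blast
    let ?N = "E * U * P"
    have "?N = E * (U * P)" using E U P by (intro assoc_mult_mat) auto
    moreover have "E * (U * P) \<in> V" using R P U by auto
    ultimately have NV: "?N \<in> V" by simp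
    have c1: "U * P \<in> carrier_mat n n" "E * (U * P) \<in> carrier_mat n n" using P U E by auto
    have "?N * ?N = E * (U * P) * (E * (U * P))" using P U E by simp
    also have "\<dots> = E * ((U * P) * (E * (U * P)))" using E(1) c1 by (rule assoc_mult_mat)
    also have "(U * P) * (E * (U * P)) = U * (P * (E * (U * P)))" using U P c1 by (intro assoc_mult_mat) auto
    finally have "?N * ?N = E * (U * (P * (E * (U * P))))" .
    also have "\<dots> = 0\<^sub>m n n" using PEX[of "U * P"] P U E by simp
    finally have "?N * ?N = 0\<^sub>m n n" .
    then show ?thesis using NV U nilp_not_qi[of ?N n] P E by auto
  qed
qed

lemma mathieu_sub: "mathieu \<theta> n W \<Longrightarrow> is_K_subspace n W"
  by (cases \<theta>) (auto simp: left_mathieu_def right_mathieu_def two_sided_mathieu_def)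

lemma mathieu_side:
  assumes M: "mathieu \<theta> n V" and E: "E \<in> carrier_mat n n" "E * E = (E::'a::field mat)"
    and EV: "E \<in> V"
  shows "(\<forall>b\<in>carrier_mat n n. b * E \<in> V) \<or> (\<forall>b\<in>carrier_mat n n. E * b \<in> V)"
proof -
  have pw: "E ^\<^sub>m m = E" if "m \<ge> 1" for m using pow_idem[OF E that] .
  have ap: "all_powers_in E V" unfolding all_powers_in_def using pw EV by simp
  have LL: "\<forall>b\<in>carrier_mat n n. b * E \<in> V" if HH: "left_mathieu n V"
  proof
    fix b :: "'a mat" assume b: "b \<in> carrier_mat n n"
    obtain N where "\<forall>m\<ge>N. b * E ^\<^sub>m m \<in> V" using HH E ap b unfolding left_mathieu_def by blast
    then have "b * E ^\<^sub>m (max N 1) \<in> V" by simp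
    then show "b * E \<in> V" using pw[of "max N 1"] by simp
  qed
  have RR: "\<forall>b\<in>carrier_mat n n. E * b \<in> V" if HH: "right_mathieu n V"
  proof
    fix b :: "'a mat" assume b: "b \<in> carrier_mat n n"
    obtain N where "\<forall>m\<ge>N. E ^\<^sub>m m * b \<in> V" using HH E ap b unfolding right_mathieu_def by blast
    then have "E ^\<^sub>m (max N 1) * b \<in> V" by simp
    then show "E * b \<in> V" using pw[of "max N 1"] by simp
  qed
  have TT: "\<forall>b\<in>carrier_mat n n. b * E \<in> V" if HH: "two_sided_mathieu n V"
  proof
    fix b :: "'a mat" assume b: "b \<in> carrier_mat n n"
    obtain N where "\<forall>m\<ge>N. b * E ^\<^sub>m m * 1\<^sub>m n \<in> V"
      using HH E ap b unfolding two_sided_mathieu_def by (meson one_carrier_mat)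
    then have "b * E ^\<^sub>m (max N 1) * 1\<^sub>m n \<in> V" by simp
    then show "b * E \<in> V" using pw[of "max N 1"] b E by simp
  qed
  show ?thesis using M LL RR TT by (cases \<theta>) auto
qed

theorem proposition5p5:
  fixes \<theta> :: mathieu_type and n :: nat and V :: "'a::field mat set"
  assumes "n \<ge> 2" and "is_K_subspace n V"
  shows "minimal_nontrivial_mathieu \<theta> n V \<longleftrightarrow>
    (\<exists>A\<in>carrier_mat n n. A \<noteq> 0\<^sub>m n n \<and> \<not> quasi_idempotent A \<and> V = {c \<cdot>\<^sub>m A | c. True})"
proof
  assume min: "minimal_nontrivial_mathieu \<theta> n V"
  have M: "mathieu \<theta> n V" and NT: "nontrivial_subspace n V"
    and mn: "\<And>W. mathieu \<theta> n W \<Longrightarrow> nontrivial_subspace n W \<Longrightarrow> W \<subseteq> V \<Longrightarrow> W = V"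
    using min unfolding minimal_nontrivial_mathieu_def by blast+
  have sub: "is_K_subspace n V" by fact
  have Vc: "V \<subseteq> carrier_mat n n" and z: "0\<^sub>m n n \<in> V"
    and sm: "\<And>c A. A \<in> V \<Longrightarrow> c \<cdot>\<^sub>m A \<in> V"
    using sub unfolding is_K_subspace_def by blast+
  obtain B where B: "B \<in> V" "B \<noteq> 0\<^sub>m n n" using NT z unfolding nontrivial_subspace_def by blast
  have Bc: "B \<in> carrier_mat n n" using B Vc by blast
  have ex: "\<exists>N\<in>V. N \<noteq> 0\<^sub>m n n \<and> \<not> quasi_idempotent N"
  proof (cases "quasi_idempotent B")
    case False then show ?thesis using B by blast
  next
    case True
    then obtain r where r: "r \<noteq> 0" "B * B = r \<cdot>\<^sub>m B" unfolding quasi_idempotent_def by blast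
    define E where "E = (1/r) \<cdot>\<^sub>m B"
    have Ec: "E \<in> carrier_mat n n" unfolding E_def using Bc by simp
    have EV: "E \<in> V" unfolding E_def using sm B by blast
    have "E * E = (1/r) \<cdot>\<^sub>m (B * ((1/r) \<cdot>\<^sub>m B))"
      unfolding E_def using Bc by (intro mult_smult_assoc_mat) auto
    also have "B * ((1/r) \<cdot>\<^sub>m B) = (1/r) \<cdot>\<^sub>m (B * B)" using Bc by (intro mult_smult_distrib) auto
    finally have "E * E = E" unfolding E_def using r by (simp add: smult_smult_mat')
    moreover have "E \<noteq> 0\<^sub>m n n"
    proof
      assume "E = 0\<^sub>m n n"
      then have "r \<cdot>\<^sub>m E = 0\<^sub>m n n" by simp
      moreover have "r \<cdot>\<^sub>m E = B" unfolding E_def using r by (simp add: smult_smult_mat')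
      ultimately show False using B by simp
    qed
    ultimately show ?thesis
      using idem_side[OF Ec _ _ sub _ mathieu_side[OF M Ec _ EV]] NT unfolding nontrivial_subspace_def
      by blast
  qed
  then obtain N where N: "N \<in> V" "N \<noteq> 0\<^sub>m n n" "\<not> quasi_idempotent N" by blast
  have Nc: "N \<in> carrier_mat n n" using N Vc by blast
  have "{c \<cdot>\<^sub>m N | c. True} = V"
    using mn[OF line_mathieu[OF Nc N(3)] line_nontrivial[OF assms(1) Nc N(2)]] sm N by blast
  then show "\<exists>A\<in>carrier_mat n n. A \<noteq> 0\<^sub>m n n \<and> \<not> quasi_idempotent A \<and> V = {c \<cdot>\<^sub>m A | c. True}"
    using Nc N by blast
next
  assume "\<exists>A\<in>carrier_mat n n. A \<noteq> 0\<^sub>m n n \<and> \<not> quasi_idempotent A \<and> V = {c \<cdot>\<^sub>m A | c. True}"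
  then obtain A where A: "A \<in> carrier_mat n n" "A \<noteq> 0\<^sub>m n n" "\<not> quasi_idempotent A"
    and V: "V = {c \<cdot>\<^sub>m A | c. True}" by blast
  show "minimal_nontrivial_mathieu \<theta> n V"
    unfolding minimal_nontrivial_mathieu_def V
  proof (intro conjI allI impI)
    show "mathieu \<theta> n {c \<cdot>\<^sub>m A |c. True}" by (rule line_mathieu[OF A(1) A(3)])
    show "nontrivial_subspace n {c \<cdot>\<^sub>m A |c. True}" by (rule line_nontrivial[OF assms(1) A(1) A(2)])
    fix W assume W: "mathieu \<theta> n W \<and> nontrivial_subspace n W \<and> W \<subseteq> {c \<cdot>\<^sub>m A |c. True}"
    show "W = {c \<cdot>\<^sub>m A |c. True}"
      using line_minimal[OF mathieu_sub[of \<theta> n W]] W unfolding nontrivial_subspace_def by blast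
  qed
qed

end
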